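(* Let $A\in\mathbb{R}^{m\times n}$, and let $p:[0,\infty)\to\mathbb{R}$ be concave, increasing and continuous with right derivative $p'(0+)>0$. For $x\in\mathbb{R}^n$ define $R(x)\in\mathbb{R}^n$ by $$R(x)_i=\mathrm{sgn}(x_i)\Big(1-\frac{d_i(x)}{p'(0+)}\Big),$$ where $d_i(x)=p'(0+)$ if $x_i=0$, and, if $x_i\neq0$, $d_i(x)$ is any element of the superdifferential $[p'_+(|x_i|),p'_-(|x_i|)]$ of the concave function $p$ at $|x_i|$, chosen depending only on $|x_i|$. Let $\bar x\in\mathbb{R}^n$ have support $T$ and equal-height peaks, i.e. $|\bar x_i|=|\bar x_j|$ for all $i,j\in T$. Consider the iteration $x^{(0)}=\mathbf{0}$ and $$x^{(k+1)}\in\arg\min_{x\in\mathbb{R}^n}\ \|x\|_1-\langle R(x^{(k)}),x\rangle\quad\text{s.t.}\quad Ax=A\bar x,\qquad k=0,1,2,\dots$$ If basis pursuit uniquely recovers $\bar x$, i.e. $\bar x$ is the unique solution of $\min_x\|x\|_1$ s.t. $Ax=A\bar x$, then so does the iteration: for every $k\ge0$ the minimization problem defining $x^{(k+1)}$ has $\bar x$ as its unique solution, so $x^{(k)}=\bar x$ for all $k\ge1$.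
   Context: $\mathrm{sgn}(t)=t/|t|$ for $t\neq0$ and $\mathrm{sgn}(0)=0$. The support of $\bar x$ is $\{i:\bar x_i\neq0\}$. *)

theory Defs
  imports "HOL-Analysis.Analysis"
begin

definition l1norm :: "real ^ 'n \<Rightarrow> real" where
  "l1norm x = (\<Sum>i\<in>UNIV. \<bar>x $ i\<bar>)"

definition superdiff :: "(real \<Rightarrow> real) \<Rightarrow> real \<Rightarrow> real set" where
  "superdiff p t = {g. \<forall>s\<ge>0. p s \<le> p t + g * (s - t)}"

text \<open>The map R; d0 = p'(0+), dsel t = chosen supergradient at t > 0.\<close>
definition Rmap :: "real \<Rightarrow> (real \<Rightarrow> real) \<Rightarrow> real ^ 'n \<Rightarrow> real ^ 'n" where
  "Rmap d0 dsel x = (\<chi> i. sgn (x $ i) *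
      (1 - (if x $ i = 0 then d0 else dsel \<bar>x $ i\<bar>) / d0))"

definition iter_obj :: "real ^ 'n \<Rightarrow> real ^ 'n \<Rightarrow> real" where
  "iter_obj r x = l1norm x - r \<bullet> x"

definition is_argmin_affine :: "(real ^ 'n \<Rightarrow> real) \<Rightarrow> real ^ 'n ^ 'm \<Rightarrow> real ^ 'm \<Rightarrow> real ^ 'n \<Rightarrow> bool" where
  "is_argmin_affine f A b x \<longleftrightarrow> A *v x = b \<and> (\<forall>y. A *v y = b \<longrightarrow> f x \<le> f y)"

definition is_unique_argmin_affine :: "(real ^ 'n \<Rightarrow> real) \<Rightarrow> real ^ 'n ^ 'm \<Rightarrow> real ^ 'm \<Rightarrow> real ^ 'n \<Rightarrow> bool" where
  "is_unique_argmin_affine f A b x \<longleftrightarrow> is_argmin_affine f A b x \<and> (\<forall>y. is_argmin_affine f A b y \<longrightarrow> y = x)"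

end

theory Submission
  imports Defs
begin

lemma dbound:
  fixes p :: "real \<Rightarrow> real"
  assumes concave: "concave_on {0..} p"
    and rderiv: "(p has_real_derivative d0) (at 0 within {0..})"
    and h: "h > 0"
  shows "p h - p 0 \<le> d0 * h"
proof -
  let ?q = "(p h - p 0) / h"
  have lim: "((\<lambda>y. (p y - p 0) / (y - 0)) \<longlongrightarrow> d0) (at 0 within {0..})"
    using rderiv by (simp add: has_field_derivative_iff)
  have ev: "\<forall>\<^sub>F y in at 0 within {0..}. ?q \<le> (p y - p 0) / (y - 0)"
  proof -
    have "\<forall>\<^sub>F y in at 0 within {0..}. y \<in> {0<..<h}"
    proof -
      have "\<forall>\<^sub>F y in at 0 within {0..}. y \<in> {0..} \<and> y \<noteq> 0" by (simp add: eventually_at_filter)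
      moreover have "\<forall>\<^sub>F y in at 0 within {0..}. y < h"
        using h by (intro order_tendstoD(2)[OF tendsto_ident_at]) simp
      ultimately show ?thesis by eventually_elim auto
    qed
    then show ?thesis
    proof eventually_elim
      case (elim y)
      define t where "t = y / h"
      have t: "0 < t" "t < 1" using elim h by (auto simp: t_def)
      have "(1 - t) * p 0 + t * p h \<le> p ((1 - t) * 0 + t * h)"
        using concave_onD[OF concave, of t 0 h] t h by simp
      then have "(1 - t) * p 0 + t * p h \<le> p y" using h by (simp add: t_def)
      then have "t * (p h - p 0) \<le> p y - p 0" by (simp add: algebra_simps)
      then show ?case using elim h by (simp add: t_def field_simps)
    qed
  qed
  have "?q \<le> d0"
    by (rule tendsto_lowerbound[OF lim ev]) (simp add: at_within_Ici_at_right)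
  then show ?thesis using h by (simp add: field_simps)
qed
lemma key:
  fixes A :: "real ^ 'n ^ 'm" and xbar :: "real ^ 'n" and c h :: real
  assumes c: "0 \<le> c" "c \<le> 1" and h: "h > 0"
    and hp: "\<And>i. xbar $ i \<noteq> 0 \<Longrightarrow> \<bar>xbar $ i\<bar> = h"
    and bp: "is_unique_argmin_affine l1norm A (A *v xbar) xbar"
  shows "is_unique_argmin_affine (iter_obj (\<chi> i. c * sgn (xbar $ i))) A (A *v xbar) xbar"
proof -
  define S where "S y = (\<Sum>i\<in>UNIV. sgn (xbar $ i) * y $ i)" for y :: "real ^ 'n"
  have f: "iter_obj (\<chi> i. c * sgn (xbar $ i)) y = l1norm y - c * S y" for y
    by (simp add: iter_obj_def inner_vec_def S_def sum_distrib_left mult.assoc)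
  have Sle: "S y \<le> l1norm y" for y
    unfolding S_def l1norm_def
    by (intro sum_mono) (auto simp: sgn_real_def abs_if)
  have Sx: "S xbar = l1norm xbar"
    unfolding S_def l1norm_def by (intro sum.cong) (auto simp: sgn_real_def abs_if)
  have bp1: "A *v y = A *v xbar \<Longrightarrow> l1norm xbar \<le> l1norm y" for y
    using bp by (simp add: is_unique_argmin_affine_def is_argmin_affine_def)
  have bp2: "A *v y = A *v xbar \<Longrightarrow> l1norm y \<le> l1norm xbar \<Longrightarrow> y = xbar" for y
  proof -
    assume y: "A *v y = A *v xbar" and l: "l1norm y \<le> l1norm xbar"
    have "is_argmin_affine l1norm A (A *v xbar) y"
      unfolding is_argmin_affine_def
    proof (intro conjI allI impI)
      show "A *v y = A *v xbar" by (rule y)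
      fix z assume "A *v z = A *v xbar"
      then show "l1norm y \<le> l1norm z" using l bp1[of z] by linarith
    qed
    then show "y = xbar" using bp unfolding is_unique_argmin_affine_def by blast
  qed
  have minim: "A *v y = A *v xbar \<Longrightarrow>
     iter_obj (\<chi> i. c * sgn (xbar $ i)) xbar \<le> iter_obj (\<chi> i. c * sgn (xbar $ i)) y" for y
  proof -
    assume y: "A *v y = A *v xbar"
    have "0 \<le> (1 - c) * (l1norm y - l1norm xbar)" using bp1[OF y] c by simp
    moreover have "0 \<le> c * (l1norm y - S y)" using Sle[of y] c by simp
    ultimately show ?thesis unfolding f using Sx by (simp add: algebra_simps)
  qed
  have uniq: "y = xbar" if y: "A *v y = A *v xbar"
     and le: "iter_obj (\<chi> i. c * sgn (xbar $ i)) y \<le> iter_obj (\<chi> i. c * sgn (xbar $ i)) xbar" for y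
  proof -
    have a: "0 \<le> (1 - c) * (l1norm y - l1norm xbar)" using bp1[OF y] c by simp
    have b: "0 \<le> c * (l1norm y - S y)" using Sle[of y] c by simp
    have sum0: "(1 - c) * (l1norm y - l1norm xbar) + c * (l1norm y - S y) = 0"
      using le a b unfolding f using Sx by (simp add: algebra_simps)
    show ?thesis
    proof (cases "c = 1")
      case False
      then have "(1 - c) * (l1norm y - l1norm xbar) = 0" using a b sum0 by linarith
      then have "l1norm y \<le> l1norm xbar" using False by simp
      then show ?thesis using bp2[OF y] by simp
    next
      case True
      then have "l1norm y - S y = 0" using a b sum0 by simp
      then have "(\<Sum>i\<in>UNIV. \<bar>y $ i\<bar> - sgn (xbar $ i) * y $ i) = 0"
        by (simp add: l1norm_def S_def sum_subtractf)
      moreover have "\<forall>i\<in>UNIV. 0 \<le> \<bar>y $ i\<bar> - sgn (xbar $ i) * y $ i"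
        by (auto simp: sgn_real_def abs_if)
      ultimately have eq: "\<And>i. \<bar>y $ i\<bar> = sgn (xbar $ i) * y $ i"
        using sum_nonneg_eq_0_iff[of UNIV "\<lambda>i. \<bar>y $ i\<bar> - sgn (xbar $ i) * y $ i"] by auto
      define e where "e = h / (1 + l1norm y)"
      have l1pos: "0 \<le> l1norm y" unfolding l1norm_def by (simp add: sum_nonneg)
      have e: "0 < e" "e * l1norm y \<le> h" using h l1pos
        by (auto simp: e_def field_simps)
      define w where "w = xbar + e *\<^sub>R (xbar - y)"
      have Aw: "A *v w = A *v xbar"
        by (simp add: w_def matrix_vector_right_distrib matrix_vector_mult_diff_distrib
            matrix_vector_mult_scaleR y)
      have yi: "\<bar>y $ i\<bar> \<le> l1norm y" for i
        unfolding l1norm_def by (rule member_le_sum) auto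
      have wi: "\<bar>w $ i\<bar> = (1 + e) * \<bar>xbar $ i\<bar> - e * \<bar>y $ i\<bar>" for i
      proof (cases "xbar $ i = 0")
        case True
        then have "y $ i = 0" using eq[of i] by simp
        then show ?thesis using True by (simp add: w_def)
      next
        case False
        have hi: "\<bar>xbar $ i\<bar> = h" using hp False by simp
        have "e * \<bar>y $ i\<bar> \<le> e * l1norm y" using e yi[of i] by simp
        then have le2: "e * \<bar>y $ i\<bar> \<le> h" using e(2) by linarith
        show ?thesis
        proof (cases "xbar $ i > 0")
          case True
          then have "y $ i = \<bar>y $ i\<bar>" using eq[of i] by simp
          then have "w $ i = (1 + e) * h - e * \<bar>y $ i\<bar>"
            using True hi by (simp add: w_def algebra_simps)
          moreover have "0 \<le> (1 + e) * h - e * \<bar>y $ i\<bar>"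
            using le2 mult_pos_pos[OF e(1) h] distrib_right[of 1 e h] by linarith
          ultimately show ?thesis using hi by simp
        next
          case F2: False
          then have "xbar $ i < 0" using False by simp
          then have "y $ i = - \<bar>y $ i\<bar>" using eq[of i] by simp
          then have "w $ i = - ((1 + e) * h - e * \<bar>y $ i\<bar>)"
            using \<open>xbar $ i < 0\<close> hi by (subst (asm) eq_commute) (simp add: w_def algebra_simps)
          moreover have "0 \<le> (1 + e) * h - e * \<bar>y $ i\<bar>"
            using le2 mult_pos_pos[OF e(1) h] distrib_right[of 1 e h] by linarith
          ultimately show ?thesis using hi by simp
        qed
      qed
      have "l1norm w = (1 + e) * l1norm xbar - e * l1norm y"
        unfolding l1norm_def wi by (simp add: sum_subtractf sum_distrib_left)
      moreover have "l1norm xbar \<le> l1norm w" using bp1[OF Aw] .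
      ultimately have "e * l1norm y \<le> e * l1norm xbar" by (simp add: algebra_simps)
      then have "l1norm y \<le> l1norm xbar" using e by simp
      then show ?thesis using bp2[OF y] by simp
    qed
  qed
  have Ax: "A *v xbar = A *v xbar" ..
  show ?thesis
    unfolding is_unique_argmin_affine_def is_argmin_affine_def
    using minim uniq by auto
qed

theorem theorem4p2:
  fixes A :: "real ^ 'n ^ 'm"
    and p :: "real \<Rightarrow> real"
    and d0 :: real
    and dsel :: "real \<Rightarrow> real"
    and xbar :: "real ^ 'n"
    and xs :: "nat \<Rightarrow> real ^ 'n"
  assumes concave: "concave_on {0..} p"
    and incr: "mono_on {0..} p"
    and cont: "continuous_on {0..} p"
    and rderiv: "(p has_real_derivative d0) (at 0 within {0..})"
    and d0_pos: "d0 > 0"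
    and dsel: "\<And>t. t > 0 \<Longrightarrow> dsel t \<in> superdiff p t"
    and equal_peaks: "\<And>i j. xbar $ i \<noteq> 0 \<Longrightarrow> xbar $ j \<noteq> 0 \<Longrightarrow> \<bar>xbar $ i\<bar> = \<bar>xbar $ j\<bar>"
    and x0: "xs 0 = 0"
    and step: "\<And>k. is_argmin_affine (iter_obj (Rmap d0 dsel (xs k))) A (A *v xbar) (xs (Suc k))"
    and bp: "is_unique_argmin_affine l1norm A (A *v xbar) xbar"
  shows "(\<forall>k. is_unique_argmin_affine (iter_obj (Rmap d0 dsel (xs k))) A (A *v xbar) xbar)
       \<and> (\<forall>k\<ge>1. xs k = xbar)"
  proof -
  obtain h where h: "h > 0" and hp: "\<And>i. xbar $ i \<noteq> 0 \<Longrightarrow> \<bar>xbar $ i\<bar> = h"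
  proof (cases "\<exists>j. xbar $ j \<noteq> 0")
    case True
    then obtain j where j: "xbar $ j \<noteq> 0" by blast
    show ?thesis
    proof (rule that[of "\<bar>xbar $ j\<bar>"])
      show "0 < \<bar>xbar $ j\<bar>" using j by simp
      fix i assume "xbar $ i \<noteq> 0"
      then show "\<bar>xbar $ i\<bar> = \<bar>xbar $ j\<bar>" using equal_peaks j by blast
    qed
  next
    case False
    show ?thesis by (rule that[of 1]) (use False in auto)
  qed
  define g where "g = dsel h"
  have g: "\<forall>s\<ge>0. p s \<le> p h + g * (s - h)" using dsel[OF h] by (simp add: g_def superdiff_def)
  have "p h \<le> p (h + 1)" using h by (intro mono_onD[OF incr]) auto
  moreover have "p (h + 1) \<le> p h + g" using g h by (auto dest: spec[of _ "h+1"])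
  ultimately have g0: "0 \<le> g" by simp
  have "p 0 \<le> p h - g * h" using spec[OF g, of 0] by simp
  moreover have "p h - p 0 \<le> d0 * h" by (rule dbound[OF concave rderiv h])
  ultimately have "g * h \<le> d0 * h" by simp
  then have gd: "g \<le> d0" using h by simp
  define c where "c = 1 - g / d0"
  have c: "0 \<le> c" "c \<le> 1" using g0 gd d0_pos by (auto simp: c_def field_simps)
  have Rx: "Rmap d0 dsel xbar = (\<chi> i. c * sgn (xbar $ i))"
    unfolding Rmap_def c_def g_def by (rule vec_eq_iff[THEN iffD2]) (auto simp: hp)
  have R0: "Rmap d0 dsel (0::real^'n) = (\<chi> i. 0 * sgn (xbar $ i))"
    unfolding Rmap_def by (rule vec_eq_iff[THEN iffD2]) auto
  have U1: "is_unique_argmin_affine (iter_obj (Rmap d0 dsel xbar)) A (A *v xbar) xbar"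
    unfolding Rx by (rule key[OF c h hp bp])
  have U0: "is_unique_argmin_affine (iter_obj (Rmap d0 dsel 0)) A (A *v xbar) xbar"
    unfolding R0 by (rule key[OF _ _ h hp bp]) auto
  have cases: "xs k = 0 \<or> xs k = xbar" for k
  proof (induction k)
    case 0 then show ?case using x0 by simp
  next
    case (Suc k)
    then have "is_unique_argmin_affine (iter_obj (Rmap d0 dsel (xs k))) A (A *v xbar) xbar"
      using U0 U1 by auto
    then show ?case using step[of k] unfolding is_unique_argmin_affine_def by auto
  qed
  have all: "is_unique_argmin_affine (iter_obj (Rmap d0 dsel (xs k))) A (A *v xbar) xbar" for k
    using cases[of k] U0 U1 by auto
  have "xs (Suc k) = xbar" for k
    using all[of k] step[of k] unfolding is_unique_argmin_affine_def by auto
  then have "\<forall>k\<ge>1. xs k = xbar"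
  proof (intro allI impI)
    fix k :: nat assume k: "1 \<le> k" and S: "\<And>k. xs (Suc k) = xbar"
    then obtain j where "k = Suc j" by (cases k) auto
    then show "xs k = xbar" using S by simp
  qed
  then show ?thesis using all by blast
qed

end
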